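(* There is a constant $c$ depending only on $\Gamma$ and $B$ such that for every open ball $C\subset B$ and every $f\in L^\infty(B)$, $$\|Y_Cf\|_{L^2(\mathcal{R}_B)}\le c\,(\mathrm{rad}(B)-\mathrm{rad}(C))^{1/2}\,\|f\|_{L^\infty(B)},$$ where $Y_C=D-D_C=1_{\mathcal{R}_B\setminus\mathcal{R}_C}D$.
   Context: $B\subset\mathbb{R}^3$ is an open ball centred at the origin; $\Gamma\subset\mathbb{R}^3$ is a $C^\infty$ curve of finite length $L$, parametrized by arclength $t\mapsto\gamma(t)$, not intersecting $\overline{B}$. The cone-beam transform of $f\in L^\infty(B)$ (extended by zero outside $B$) is $Df(a,\theta)=\int_0^\infty f(a+t\theta)\,dt$. For an open ball $C$, $\mathcal{R}_C=\{(a,\theta):a\in\Gamma,\ \theta\in S^2,\ \{a+t\theta:t\ge0\}\cap C\neq\emptyset\}$; $\mathcal{R}_B$ is defined likewise, with volume element $dt\,d\theta$ ($t$ arclength on $\Gamma$, $d\theta$ surface measure on $S^2$). The $C$-truncated cone-beam transform is $D_C=1_{\mathcal{R}_C}D$, viewed as a function on $\mathcal{R}_B$; $\mathrm{rad}(\cdot)$ denotes radius. *)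

theory Defs
  imports "HOL-Probability.Probability"
begin

type_synonym pt = "real^3"

definition smooth_on :: "real set \<Rightarrow> (real \<Rightarrow> pt) \<Rightarrow> bool" where
  "smooth_on S g \<longleftrightarrow> (\<exists>d :: nat \<Rightarrow> real \<Rightarrow> pt. d 0 = g \<and>
      (\<forall>k. \<forall>t\<in>S. (d k has_vector_derivative d (Suc k) t) (at t within S)))"

text \<open>Surface measure on the unit sphere S^2 (cone measure):
  sigma(A) = 3 * lebesgue{x in unit ball : x/|x| in A}.\<close>
definition sphere_measure :: "pt measure" where
  "sphere_measure = distr (density lborel (\<lambda>x. 3 * indicator (ball 0 1) x)) borel
                          (\<lambda>x. x /\<^sub>R norm x)"

definition cone_beam :: "pt set \<Rightarrow> (pt \<Rightarrow> real) \<Rightarrow> pt \<Rightarrow> pt \<Rightarrow> real" where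
  "cone_beam B f a \<theta> = (LINT s:{0..}|lborel. indicator B (a + s *\<^sub>R \<theta>) * f (a + s *\<^sub>R \<theta>))"

definition ray_set :: "(real \<Rightarrow> pt) \<Rightarrow> real \<Rightarrow> pt set \<Rightarrow> (pt \<times> pt) set" where
  "ray_set \<gamma> L C = {(a, \<theta>). a \<in> \<gamma> ` {0..L} \<and> \<theta> \<in> sphere 0 1 \<and> (\<exists>s\<ge>0. a + s *\<^sub>R \<theta> \<in> C)}"

text \<open>Y_C f = 1_{R_B \ R_C} D f, as function of (arclength parameter t, direction theta).\<close>
definition Y_trunc :: "(real \<Rightarrow> pt) \<Rightarrow> real \<Rightarrow> pt set \<Rightarrow> pt set \<Rightarrow> (pt \<Rightarrow> real) \<Rightarrow> real \<times> pt \<Rightarrow> real" where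
  "Y_trunc \<gamma> L B C f = (\<lambda>(t, \<theta>). indicator (ray_set \<gamma> L B - ray_set \<gamma> L C) (\<gamma> t, \<theta>)
                                  * cone_beam B f (\<gamma> t) \<theta>)"

definition L2_sq_RB :: "real \<Rightarrow> (real \<times> pt \<Rightarrow> real) \<Rightarrow> ennreal" where
  "L2_sq_RB L g = (\<integral>\<^sup>+ p. ennreal ((g p)\<^sup>2) \<partial>(lebesgue_on {0..L} \<Otimes>\<^sub>M sphere_measure))"

definition Linf_norm :: "pt set \<Rightarrow> (pt \<Rightarrow> real) \<Rightarrow> ereal" where
  "Linf_norm B f = esssup (lebesgue_on B) (\<lambda>x. ereal \<bar>f x\<bar>)"

end

theory Submission
  imports Defs "HOL-Real_Asymp.Real_Asymp"
begin

lemma ballm[measurable]: "ball (c::'a::euclidean_space) r \<in> sets borel" by simp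

lemma tau_integral:
  fixes \<delta> :: real assumes "\<delta> > 0"
  shows "(\<integral>\<^sup>+x\<in>{\<delta>..}. ennreal (1/x^3) \<partial>lborel) = ennreal (1/(2*\<delta>^2))"
proof -
  have "(\<integral>\<^sup>+x\<in>{\<delta>..}. ennreal (1/x^3) \<partial>lborel) = ennreal (0 - (-1/(2*\<delta>^2)))"
  proof (rule nn_integral_FTC_atLeast[where F="\<lambda>x. -1/(2*x^2)"])
    show "(\<lambda>x::real. 1/x^3) \<in> borel_measurable borel" by measurable
    fix x assume "\<delta> \<le> x"
    then have x: "x > 0" using assms by auto
    show "((\<lambda>x. -1/(2*x^2)) has_real_derivative 1/x^3) (at x)"
      using x by (auto intro!: derivative_eq_intros simp: field_simps power2_eq_square power3_eq_cube)
    show "0 \<le> 1/x^3" using x by simp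
  next
    show "((\<lambda>x::real. -1/(2*x^2)) \<longlongrightarrow> 0) at_top" by real_asymp
  qed
  then show ?thesis by simp
qed

lemma normalize_meas[measurable]: "(\<lambda>x::pt. x /\<^sub>R norm x) \<in> borel \<rightarrow>\<^sub>M borel"
  by (intro borel_measurable_scaleR borel_measurable_inverse borel_measurable_norm measurable_ident_sets) auto

lemma sphere_nn_integral:
  assumes [measurable]: "G \<in> borel_measurable borel"
  shows "(\<integral>\<^sup>+\<theta>. G \<theta> \<partial>sphere_measure) = (\<integral>\<^sup>+x. 3 * indicator (ball 0 1) x * G (x /\<^sub>R norm x) \<partial>lborel)"
  unfolding sphere_measure_def
  apply (subst nn_integral_distr)
    apply measurable
  apply (subst nn_integral_density)
    apply measurable
  done


lemma affine_scale_integral: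
  fixes k :: "pt \<Rightarrow> ennreal" and a :: pt and \<tau> :: real
  assumes k[measurable]: "k \<in> borel_measurable borel" and t: "\<tau> > 0"
  shows "(\<integral>\<^sup>+x. k (a + \<tau> *\<^sub>R x) \<partial>lborel) = ennreal (1/\<tau>^3) * (\<integral>\<^sup>+y. k y \<partial>lborel)"
proof -
  have "(\<integral>\<^sup>+y. k y \<partial>lborel) = (\<integral>\<^sup>+y. k y \<partial>(density (distr lborel borel (\<lambda>x. a + \<tau> *\<^sub>R x)) (\<lambda>_. \<bar>\<tau>\<bar>^DIM(pt))))"
    using lborel_affine[of \<tau> a] t by simp
  also have "\<dots> = (\<integral>\<^sup>+x. ennreal (\<tau>^3) * k (a + \<tau> *\<^sub>R x) \<partial>lborel)"
    using t by (simp add: nn_integral_density nn_integral_distr ennreal_power)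
  also have "\<dots> = ennreal (\<tau>^3) * (\<integral>\<^sup>+x. k (a + \<tau> *\<^sub>R x) \<partial>lborel)"
    by (rule nn_integral_cmult) measurable
  finally have "ennreal (1/\<tau>^3) * (\<integral>\<^sup>+y. k y \<partial>lborel) = ennreal (1/\<tau>^3) * ennreal (\<tau>^3) * (\<integral>\<^sup>+x. k (a + \<tau> *\<^sub>R x) \<partial>lborel)"
    by (simp add: mult.assoc)
  also have "ennreal (1/\<tau>^3) * ennreal (\<tau>^3) = 1"
    using t by (simp add: ennreal_mult''[symmetric])
  finally show ?thesis by simp
qed

lemma ray_sphere_bound:
  fixes k :: "pt \<Rightarrow> ennreal" and a :: pt and R \<delta> :: real
  assumes k[measurable]: "k \<in> borel_measurable borel"
    and \<delta>: "\<delta> > 0" and kz: "\<And>y. R \<le> norm y \<Longrightarrow> k y = 0" and a: "R + \<delta> \<le> norm a"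
  shows "(\<integral>\<^sup>+\<theta>. (\<integral>\<^sup>+s. indicator {0..} s * k (a + s *\<^sub>R \<theta>) \<partial>lborel) \<partial>sphere_measure)
           \<le> ennreal (3/(2*\<delta>^2)) * (\<integral>\<^sup>+y. k y \<partial>lborel)"
proof -
  define G where "G = (\<lambda>\<theta>. \<integral>\<^sup>+s. indicator {0..} s * k (a + s *\<^sub>R \<theta>) \<partial>lborel)"
  define H where "H = (\<lambda>(x::pt) (\<tau>::real). indicator {0..} \<tau> * indicator (ball 0 1) x * k (a + \<tau> *\<^sub>R x))"
  define K where "K = (\<integral>\<^sup>+y. k y \<partial>lborel)"
  have Gm: "G \<in> borel_measurable borel" unfolding G_def by measurable
  have "case_prod H \<in> borel_measurable (borel \<Otimes>\<^sub>M borel)" unfolding H_def by measurable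
  then have Hm: "case_prod H \<in> borel_measurable (lborel \<Otimes>\<^sub>M lborel)"
    by (simp add: measurable_cong_sets[OF sets_pair_measure_cong[OF sets_lborel sets_lborel] refl])
  have "(\<integral>\<^sup>+\<theta>. G \<theta> \<partial>sphere_measure) = (\<integral>\<^sup>+x. 3 * indicator (ball 0 1) x * G (x /\<^sub>R norm x) \<partial>lborel)"
    by (rule sphere_nn_integral[OF Gm])
  also have "\<dots> \<le> (\<integral>\<^sup>+x. 3 * (\<integral>\<^sup>+\<tau>. H x \<tau> \<partial>lborel) \<partial>lborel)"
  proof (rule nn_integral_mono)
    fix x :: pt
    show "3 * indicator (ball 0 1) x * G (x /\<^sub>R norm x) \<le> 3 * (\<integral>\<^sup>+\<tau>. H x \<tau> \<partial>lborel)"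
    proof (cases "x \<in> ball 0 1")
      case False then show ?thesis by simp
    next
      case xb: True
      show ?thesis
      proof (cases "x = 0")
        case True
        have "k a = 0" using kz a \<delta> by simp
        then show ?thesis using True by (simp add: G_def)
      next
        case False
        define c where "c = norm x"
        have c: "c > 0" "c \<le> 1" using False xb by (auto simp: c_def)
        have "G (x /\<^sub>R c) = ennreal \<bar>c\<bar> * (\<integral>\<^sup>+\<tau>. indicator {0..} (0 + c*\<tau>) * k (a + (0 + c*\<tau>) *\<^sub>R (x /\<^sub>R c)) \<partial>lborel)"
          unfolding G_def by (rule nn_integral_real_affine) (measurable, use c in simp)
        also have "(\<lambda>\<tau>. indicator {0..} (0 + c*\<tau>) * k (a + (0 + c*\<tau>) *\<^sub>R (x /\<^sub>R c))) = (\<lambda>\<tau>. H x \<tau>)"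
          using c xb by (auto simp: fun_eq_iff indicator_def zero_le_mult_iff H_def field_simps)
        finally have "G (x /\<^sub>R c) \<le> 1 * (\<integral>\<^sup>+\<tau>. H x \<tau> \<partial>lborel)"
          using c mult_right_mono[of "ennreal c" 1 "integral\<^sup>N lborel (H x)"] by (simp add: ennreal_le_1)
        then show ?thesis using xb by (auto simp: c_def intro: mult_left_mono)
      qed
    qed
  qed
  also have "\<dots> = 3 * (\<integral>\<^sup>+x. (\<integral>\<^sup>+\<tau>. H x \<tau> \<partial>lborel) \<partial>lborel)"
    by (rule nn_integral_cmult) (use Hm in measurable)
  also have "(\<integral>\<^sup>+x. (\<integral>\<^sup>+\<tau>. H x \<tau> \<partial>lborel) \<partial>lborel) = (\<integral>\<^sup>+\<tau>. (\<integral>\<^sup>+x. H x \<tau> \<partial>lborel) \<partial>lborel)"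
    by (rule lborel_pair.Fubini'[symmetric, OF Hm])
  also have "\<dots> \<le> (\<integral>\<^sup>+\<tau>. K * (ennreal (1/\<tau>^3) * indicator {\<delta>..} \<tau>) \<partial>lborel)"
  proof (rule nn_integral_mono)
    fix \<tau> :: real
    show "(\<integral>\<^sup>+x. H x \<tau> \<partial>lborel) \<le> K * (ennreal (1/\<tau>^3) * indicator {\<delta>..} \<tau>)"
    proof (cases "\<tau> < \<delta>")
      case True
      have "H x \<tau> = 0" for x
      proof (cases "0 \<le> \<tau> \<and> x \<in> ball 0 1")
        case True
        have "norm (\<tau> *\<^sub>R x) \<le> \<tau>" using True by (auto simp: mult_left_le)
        then have "R \<le> norm (a + \<tau> *\<^sub>R x)" using a \<open>\<tau> < \<delta>\<close> norm_triangle_ineq2[of a "- (\<tau> *\<^sub>R x)"] by auto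
        then show ?thesis using kz by (simp add: H_def)
      qed (auto simp: H_def)
      then show ?thesis by simp
    next
      case False
      then have t: "\<tau> > 0" using \<delta> by auto
      have "(\<integral>\<^sup>+x. H x \<tau> \<partial>lborel) \<le> (\<integral>\<^sup>+x. k (a + \<tau> *\<^sub>R x) \<partial>lborel)"
        by (rule nn_integral_mono) (auto simp: H_def indicator_def)
      also have "\<dots> = ennreal (1/\<tau>^3) * K"
        unfolding K_def by (rule affine_scale_integral[OF k t])
      finally show ?thesis using False by (simp add: mult.commute)
    qed
  qed
  also have "\<dots> = K * (\<integral>\<^sup>+\<tau>\<in>{\<delta>..}. ennreal (1/\<tau>^3) \<partial>lborel)"
    by (rule nn_integral_cmult) measurable
  also have "\<dots> = K * ennreal (1/(2*\<delta>^2))" by (simp add: tau_integral[OF \<delta>])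
  finally have "(\<integral>\<^sup>+\<theta>. G \<theta> \<partial>sphere_measure) \<le> 3 * (K * ennreal (1/(2*\<delta>^2)))"
    by (simp add: mult_left_mono)
  also have "\<dots> = ennreal (3/(2*\<delta>^2)) * K"
  proof -
    have "ennreal (3/(2*\<delta>^2)) = ennreal 3 * ennreal (1/(2*\<delta>^2))"
      by (subst ennreal_mult[symmetric]) auto
    then show ?thesis by (simp add: mult.commute mult.left_commute)
  qed
  finally show ?thesis unfolding G_def K_def .
qed

lemma ray_CS:
  fixes h :: "real \<Rightarrow> real" and T :: real
  assumes h[measurable]: "h \<in> borel_measurable borel" and T: "T \<ge> 0"
    and hz: "\<And>s. s > T \<Longrightarrow> h s = 0"
  shows "ennreal ((LINT s:{0..}|lborel. h s)^2) \<le> ennreal T * (\<integral>\<^sup>+s. indicator {0..} s * ennreal ((h s)^2) \<partial>lborel)"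
proof -
  define g where "g = (\<lambda>s. indicator {0..} s *\<^sub>R h s)"
  have gm[measurable]: "g \<in> borel_measurable borel" unfolding g_def by measurable
  have LI: "(LINT s:{0..}|lborel. h s) = integral\<^sup>L lborel g"
    by (simp add: set_lebesgue_integral_def g_def)
  show ?thesis
  proof (cases "integrable lborel g")
    case False
    then show ?thesis by (simp add: LI not_integrable_integral_eq)
  next
    case True
    have "(integral\<^sup>L lborel g)^2 \<le> (integral\<^sup>L lborel (\<lambda>s. \<bar>g s\<bar>))^2"
    proof -
      have "\<bar>integral\<^sup>L lborel g\<bar> \<le> integral\<^sup>L lborel (\<lambda>s. \<bar>g s\<bar>)"
        using integral_abs_bound by blast
      then show ?thesis using abs_le_square_iff by (metis abs_ge_zero abs_of_nonneg order_trans power2_abs power_mono)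
    qed
    then have "ennreal ((integral\<^sup>L lborel g)^2) \<le> ennreal ((integral\<^sup>L lborel (\<lambda>s. \<bar>g s\<bar>))^2)"
      by (rule ennreal_leI)
    also have "\<dots> = (ennreal (integral\<^sup>L lborel (\<lambda>s. \<bar>g s\<bar>)))^2"
      by (simp add: ennreal_power)
    also have "ennreal (integral\<^sup>L lborel (\<lambda>s. \<bar>g s\<bar>)) = (\<integral>\<^sup>+s. ennreal \<bar>g s\<bar> \<partial>lborel)"
      using True by (intro nn_integral_eq_integral[symmetric]) auto
    also have "(\<integral>\<^sup>+s. ennreal \<bar>g s\<bar> \<partial>lborel) = (\<integral>\<^sup>+s. ennreal \<bar>g s\<bar> * indicator {0..T} s \<partial>lborel)"
      by (rule nn_integral_cong) (auto simp: g_def indicator_def hz)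
    also have "(\<dots>)^2 \<le> (\<integral>\<^sup>+s. (ennreal \<bar>g s\<bar>)^2 \<partial>lborel) * (\<integral>\<^sup>+s. (indicator {0..T} s)^2 \<partial>lborel)"
      by (rule Cauchy_Schwarz_nn_integral) measurable
    also have "(\<integral>\<^sup>+s. (indicator {0..T} s)^2 \<partial>lborel) = ennreal T"
    proof -
      have "(\<integral>\<^sup>+s. ((indicator {0..T} s)::ennreal)^2 \<partial>lborel) = (\<integral>\<^sup>+s. indicator {0..T} s \<partial>lborel)"
        by (rule nn_integral_cong) (simp add: indicator_def)
      then show ?thesis using T by simp
    qed
    also have "(\<integral>\<^sup>+s. (ennreal \<bar>g s\<bar>)^2 \<partial>lborel) = (\<integral>\<^sup>+s. indicator {0..} s * ennreal ((h s)^2) \<partial>lborel)"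
      by (rule nn_integral_cong) (auto simp: g_def indicator_def ennreal_power)
    finally show ?thesis by (simp add: LI mult.commute)
  qed
qed

lemma sets_sphere[measurable_cong]: "sets sphere_measure = sets borel"
  unfolding sphere_measure_def by simp

lemma space_sphere: "space sphere_measure = UNIV"
  unfolding sphere_measure_def by simp

lemma sphere_finite: "finite_measure sphere_measure"
proof (rule finite_measureI)
  have "emeasure sphere_measure (space sphere_measure) = emeasure (density lborel (\<lambda>x. 3 * indicator (ball (0::pt) 1) x)) UNIV"
    unfolding sphere_measure_def by (simp add: emeasure_distr)
  also have "\<dots> = (\<integral>\<^sup>+x. 3 * indicator (ball (0::pt) 1) x \<partial>lborel)"
    by (simp add: emeasure_density)
  also have "\<dots> = 3 * emeasure lborel (ball (0::pt) 1)"
    by (simp add: nn_integral_cmult_indicator)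
  also have "\<dots> < \<infinity>" using emeasure_lborel_ball_finite[of "0::pt" 1]
    by (simp add: ennreal_mult_less_top)
  finally show "emeasure sphere_measure (space sphere_measure) \<noteq> \<infinity>" by simp
qed

lemma ball_emeasure:
  assumes "0 \<le> \<rho>"
  shows "emeasure lebesgue (ball (c::pt) \<rho>) = ennreal (\<rho>^3 * Henstock_Kurzweil_Integration.content (ball (0::pt) 1))"
proof -
  have "ennreal (Henstock_Kurzweil_Integration.content (ball c \<rho>)) = emeasure lebesgue (ball c \<rho>)"
    using emeasure_lborel_ball_finite[of c \<rho>] by (subst emeasure_eq_ennreal_measure) auto
  then show ?thesis using content_ball_conv_unit_ball[OF assms, of c] by simp
qed

lemma ennreal_mult4:
  fixes x y z w :: real
  assumes "0 \<le> x" "0 \<le> y" "0 \<le> z" "0 \<le> w"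
  shows "ennreal x * (ennreal y * ennreal z) * ennreal w = ennreal (x * y * z * w)"
  using assms by (simp add: ennreal_mult mult.assoc)

theorem mainTheorem5:
  fixes \<gamma> :: "real \<Rightarrow> real^3" and L R :: real
  assumes "R > 0" and "L > 0"
    and "smooth_on {0..L} \<gamma>"
    and "\<forall>t\<in>{0..L}. norm (vector_derivative \<gamma> (at t within {0..L})) = 1"
    and "\<forall>t\<in>{0..L}. \<gamma> t \<notin> cball 0 R"
  shows "\<exists>c::real. \<forall>(x0::real^3) (r::real) (f::real^3 \<Rightarrow> real).
           r > 0 \<longrightarrow> ball x0 r \<subseteq> ball 0 R \<longrightarrow> f \<in> borel_measurable borel \<longrightarrow>
           Linf_norm (ball 0 R) f < \<infinity> \<longrightarrow>
           L2_sq_RB L (Y_trunc \<gamma> L (ball 0 R) (ball x0 r) f)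
             \<le> ennreal ((c * (R - r) powr (1/2) * real_of_ereal (Linf_norm (ball 0 R) f))\<^sup>2)"
proof -
  obtain d where d0: "d 0 = \<gamma>"
    and dd: "\<forall>k. \<forall>t\<in>{0..L}. (d k has_vector_derivative d (Suc k) t) (at t within {0..L})"
    using assms(3) unfolding smooth_on_def by blast
  have cont: "continuous_on {0..L} \<gamma>"
    unfolding continuous_on_eq_continuous_within
    using dd d0 has_vector_derivative_continuous by metis
  have ne: "{0..L} \<noteq> {}" using assms(2) by simp
  have nc: "continuous_on {0..L} (\<lambda>t. norm (\<gamma> t))" using cont by (intro continuous_intros)
  obtain t0 where t0: "t0 \<in> {0..L}" "\<forall>t\<in>{0..L}. norm (\<gamma> t0) \<le> norm (\<gamma> t)"
    using continuous_attains_inf[OF compact_Icc ne nc] by auto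
  obtain t1 where t1: "t1 \<in> {0..L}" "\<forall>t\<in>{0..L}. norm (\<gamma> t) \<le> norm (\<gamma> t1)"
    using continuous_attains_sup[OF compact_Icc ne nc] by auto
  define \<delta> where "\<delta> = norm (\<gamma> t0) - R"
  have "\<not> norm (\<gamma> t0) \<le> R" using assms(5) t0(1) by auto
  then have \<delta>: "\<delta> > 0" by (simp add: \<delta>_def)
  define A where "A = norm (\<gamma> t1)"
  have Aa: "\<And>t. t \<in> {0..L} \<Longrightarrow> norm (\<gamma> t) \<le> A" using t1 by (auto simp: A_def)
  have Ra: "\<And>t. t \<in> {0..L} \<Longrightarrow> R + \<delta> \<le> norm (\<gamma> t)" using t0 by (auto simp: \<delta>_def)
  have A0: "A \<ge> 0" by (simp add: A_def)
  have \<gamma>m[measurable]: "\<gamma> \<in> borel_measurable (lebesgue_on {0..L})"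
    by (rule continuous_imp_measurable_on_sets_lebesgue[OF cont]) simp
  interpret S: finite_measure sphere_measure by (rule sphere_finite)
  define U where "U = Henstock_Kurzweil_Integration.content (ball (0::pt) 1)"
  have U0: "U \<ge> 0" by (simp add: U_def)
  define Q where "Q = L * (A+R) * (3/(2*\<delta>^2)) * U * (3*R^2)"
  have Q0: "Q \<ge> 0" using assms(1,2) A0 U0 \<delta> by (simp add: Q_def)
  show ?thesis
  proof (intro exI[of _ "sqrt Q"] allI impI)
    fix x0 :: pt and r :: real and f :: "pt \<Rightarrow> real"
    assume r: "r > 0" and sub: "ball x0 r \<subseteq> ball 0 R" and fm[measurable]: "f \<in> borel_measurable borel"
      and fin: "Linf_norm (ball 0 R) f < \<infinity>"
    define B where "B = ball (0::pt) R"
    define C where "C = ball x0 r"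
    have rR: "r \<le> R" using sub r ball_subset_ball_iff[of x0 r 0 R] by (auto intro: order_trans[OF _ ]) (smt (verit) norm_ge_zero)
    have CB: "C \<subseteq> B" using sub by (simp add: B_def C_def)
    define M where "M = real_of_ereal (Linf_norm B f)"
    have "AE x in lebesgue_on B. ereal \<bar>f x\<bar> \<le> Linf_norm B f"
      unfolding Linf_norm_def by (rule esssup_AE)
    then have "AE x in lebesgue_on B. \<bar>f x\<bar> \<le> M"
    proof (rule eventually_mono)
      fix x assume "ereal \<bar>f x\<bar> \<le> Linf_norm B f"
      then show "\<bar>f x\<bar> \<le> M" using fin unfolding M_def B_def
        by (cases "Linf_norm (ball 0 R) f") auto
    qed
    then have AEf: "AE x in lebesgue. x \<in> B \<longrightarrow> \<bar>f x\<bar> \<le> M"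
      by (subst (asm) AE_restrict_space_iff) (auto simp: B_def)
    define k where "k = (\<lambda>y. ennreal (indicator (B - C) y * (f y)^2))"
    have km[measurable]: "k \<in> borel_measurable borel" unfolding k_def B_def C_def by measurable
    have kz: "\<And>y. R \<le> norm y \<Longrightarrow> k y = 0" by (auto simp: k_def B_def indicator_def)
    define K where "K = (\<integral>\<^sup>+y. k y \<partial>lborel)"
    have Kb: "K \<le> ennreal (M^2 * ((R^3 - r^3) * U))"
    proof -
      have "K = (\<integral>\<^sup>+y. k y \<partial>lebesgue)" by (simp add: K_def nn_integral_completion)
      also have "\<dots> \<le> (\<integral>\<^sup>+y. ennreal (M^2) * indicator (B - C) y \<partial>lebesgue)"
      proof (rule nn_integral_mono_AE)
        show "AE y in lebesgue. k y \<le> ennreal (M^2) * indicator (B - C) y"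
          using AEf
        proof (rule eventually_mono)
          fix y assume h: "y \<in> B \<longrightarrow> \<bar>f y\<bar> \<le> M"
          show "k y \<le> ennreal (M^2) * indicator (B - C) y"
          proof (cases "y \<in> B - C")
            case True
            then have "\<bar>f y\<bar> \<le> M" using h by auto
            then have "(f y)^2 \<le> M^2" by (metis abs_ge_zero power2_abs power_mono)
            then show ?thesis using True by (simp add: k_def ennreal_leI)
          qed (simp add: k_def)
        qed
      qed
      also have "\<dots> = ennreal (M^2) * emeasure lebesgue (B - C)"
        by (rule nn_integral_cmult_indicator) (simp add: B_def C_def)
      also have "emeasure lebesgue (B - C) = emeasure lebesgue B - emeasure lebesgue C"
        using CB emeasure_lborel_ball_finite[of x0 r] by (intro emeasure_Diff) (auto simp: B_def C_def)
      also have "\<dots> = ennreal ((R^3 - r^3) * U)"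
      proof -
        have eB: "emeasure lebesgue B = ennreal (R^3*U)" unfolding B_def U_def
          by (rule ball_emeasure) (use assms(1) in simp)
        have eC: "emeasure lebesgue C = ennreal (r^3*U)" unfolding C_def U_def
          by (rule ball_emeasure) (use r in simp)
        show ?thesis unfolding eB eC using U0 r by (simp add: ennreal_minus left_diff_distrib)
      qed
      also have "ennreal (M^2) * ennreal ((R^3 - r^3) * U) = ennreal (M^2 * ((R^3 - r^3) * U))"
        using rR r U0 by (subst ennreal_mult[symmetric]) (auto intro!: mult_nonneg_nonneg power_mono)
      finally show ?thesis .
    qed
    have pw: "ennreal ((Y_trunc \<gamma> L B C f (t,\<theta>))^2)
               \<le> ennreal (A+R) * (\<integral>\<^sup>+s. indicator {0..} s * k (\<gamma> t + s *\<^sub>R \<theta>) \<partial>lborel)"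
      if t: "t \<in> {0..L}" for t \<theta>
    proof (cases "(\<gamma> t, \<theta>) \<in> ray_set \<gamma> L B - ray_set \<gamma> L C")
      case False
      then show ?thesis by (simp add: Y_trunc_def)
    next
      case True
      define a where "a = \<gamma> t"
      have aA: "norm a \<le> A" using Aa t by (simp add: a_def)
      have n\<theta>: "norm \<theta> = 1" and nC: "\<And>s. 0 \<le> s \<Longrightarrow> a + s *\<^sub>R \<theta> \<notin> C"
        using True t unfolding ray_set_def a_def by auto
      define h where "h = (\<lambda>s. indicator (B - C) (a + s *\<^sub>R \<theta>) * f (a + s *\<^sub>R \<theta>))"
      have cb: "cone_beam B f a \<theta> = (LINT s:{0..}|lborel. h s)"
        unfolding cone_beam_def h_def
        by (rule set_lebesgue_integral_cong) (auto simp: indicator_def nC)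
      have hm[measurable]: "h \<in> borel_measurable borel" unfolding h_def B_def C_def by measurable
      have hz: "h s = 0" if s: "s > A + R" for s
      proof -
        have "norm (s *\<^sub>R \<theta>) \<le> norm (a + s *\<^sub>R \<theta>) + norm a"
          using norm_triangle_ineq4[of "a + s *\<^sub>R \<theta>" a] by simp
        then have "R < norm (a + s *\<^sub>R \<theta>)" using s aA n\<theta> assms(1) A0 by simp
        then show ?thesis by (simp add: h_def B_def indicator_def)
      qed
      have "ennreal ((LINT s:{0..}|lborel. h s)^2) \<le> ennreal (A+R) * (\<integral>\<^sup>+s. indicator {0..} s * ennreal ((h s)^2) \<partial>lborel)"
        by (rule ray_CS[OF hm _ hz]) (use A0 assms(1) in simp)
      also have "(\<integral>\<^sup>+s. indicator {0..} s * ennreal ((h s)^2) \<partial>lborel) = (\<integral>\<^sup>+s. indicator {0..} s * k (a + s *\<^sub>R \<theta>) \<partial>lborel)"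
        by (rule nn_integral_cong) (simp add: h_def k_def indicator_def power_mult_distrib)
      finally show ?thesis using True by (simp add: Y_trunc_def cb[unfolded a_def] a_def)
    qed
    have "L2_sq_RB L (Y_trunc \<gamma> L B C f)
        \<le> (\<integral>\<^sup>+p. ennreal (A+R) * (\<integral>\<^sup>+s. indicator {0..} s * k (\<gamma> (fst p) + s *\<^sub>R snd p) \<partial>lborel)
              \<partial>(lebesgue_on {0..L} \<Otimes>\<^sub>M sphere_measure))"
      unfolding L2_sq_RB_def
    proof (rule nn_integral_mono)
      fix p assume "p \<in> space (lebesgue_on {0..L} \<Otimes>\<^sub>M sphere_measure)"
      then have "fst p \<in> {0..L}" by (auto simp: space_pair_measure)
      then show "ennreal ((Y_trunc \<gamma> L B C f p)\<^sup>2)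
          \<le> ennreal (A+R) * (\<integral>\<^sup>+s. indicator {0..} s * k (\<gamma> (fst p) + s *\<^sub>R snd p) \<partial>lborel)"
        using pw[of "fst p" "snd p"] by simp
    qed
    also have "\<dots> = (\<integral>\<^sup>+t. (\<integral>\<^sup>+\<theta>. ennreal (A+R) * (\<integral>\<^sup>+s. indicator {0..} s * k (\<gamma> t + s *\<^sub>R \<theta>) \<partial>lborel)
              \<partial>sphere_measure) \<partial>lebesgue_on {0..L})"
    proof -
      have m: "(\<lambda>p. ennreal (A+R) * (\<integral>\<^sup>+s. indicator {0..} s * k (\<gamma> (fst p) + s *\<^sub>R snd p) \<partial>lborel))
          \<in> borel_measurable (lebesgue_on {0..L} \<Otimes>\<^sub>M sphere_measure)" by measurable
      show ?thesis using S.nn_integral_fst[OF m] by simp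
    qed
    also have "\<dots> \<le> (\<integral>\<^sup>+t. ennreal (A+R) * (ennreal (3/(2*\<delta>^2)) * K) \<partial>lebesgue_on {0..L})"
    proof (rule nn_integral_mono)
      fix t assume "t \<in> space (lebesgue_on {0..L})"
      then have t: "t \<in> {0..L}" by simp
      have "(\<integral>\<^sup>+\<theta>. ennreal (A+R) * (\<integral>\<^sup>+s. indicator {0..} s * k (\<gamma> t + s *\<^sub>R \<theta>) \<partial>lborel) \<partial>sphere_measure)
          = ennreal (A+R) * (\<integral>\<^sup>+\<theta>. (\<integral>\<^sup>+s. indicator {0..} s * k (\<gamma> t + s *\<^sub>R \<theta>) \<partial>lborel) \<partial>sphere_measure)"
        by (rule nn_integral_cmult) measurable
      also have "\<dots> \<le> ennreal (A+R) * (ennreal (3/(2*\<delta>^2)) * K)"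
        unfolding K_def
        by (intro mult_left_mono ray_sphere_bound[OF km \<delta> kz Ra[OF t]]) auto
      finally show "(\<integral>\<^sup>+\<theta>. ennreal (A+R) * (\<integral>\<^sup>+s. indicator {0..} s * k (\<gamma> t + s *\<^sub>R \<theta>) \<partial>lborel) \<partial>sphere_measure)
          \<le> ennreal (A+R) * (ennreal (3/(2*\<delta>^2)) * K)" .
    qed
    also have "\<dots> = ennreal (A+R) * (ennreal (3/(2*\<delta>^2)) * K) * ennreal L"
      using assms(2) by (simp add: emeasure_restrict_space)
    also have "\<dots> \<le> ennreal (A+R) * (ennreal (3/(2*\<delta>^2)) * ennreal (M^2 * ((R^3 - r^3) * U))) * ennreal L"
      by (intro mult_right_mono mult_left_mono Kb) auto
    also have "\<dots> = ennreal ((A+R) * (3/(2*\<delta>^2)) * (M^2 * ((R^3 - r^3) * U)) * L)"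
    proof (rule ennreal_mult4)
      have "r^3 \<le> R^3" using rR r by (intro power_mono) auto
      then show "0 \<le> M^2 * ((R^3 - r^3) * U)" using U0 by simp
    qed (use A0 assms(1,2) in auto)
    also have "\<dots> \<le> ennreal ((sqrt Q * (R - r) powr (1/2) * M)^2)"
    proof (rule ennreal_leI)
      have e1: "(sqrt Q * (R - r) powr (1/2) * M)^2 = Q * (R - r) * M^2"
        using Q0 rR by (simp add: power_mult_distrib powr_half_sqrt)
      have "R^3 - r^3 \<le> 3*R^2*(R - r)"
      proof -
        have "R^3 - r^3 = (R - r) * (R^2 + R*r + r^2)" by (simp add: algebra_simps power2_eq_square power3_eq_cube)
        also have "\<dots> \<le> (R - r) * (3*R^2)"
        proof (rule mult_left_mono)
          have "R*r \<le> R*R" "r*r \<le> R*R" using rR r by (auto intro: mult_mono)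
          then show "R^2 + R*r + r^2 \<le> 3*R^2" by (simp add: power2_eq_square)
        qed (use rR in simp)
        finally show ?thesis by (simp add: algebra_simps)
      qed
      then have "(L * (A+R) * (3/(2*\<delta>^2)) * U * M^2) * (R^3 - r^3) \<le> (L * (A+R) * (3/(2*\<delta>^2)) * U * M^2) * (3*R^2*(R - r))"
        using A0 assms(1,2) U0 \<delta> by (intro mult_left_mono) auto
      moreover have "(A+R) * (3/(2*\<delta>^2)) * (M^2 * ((R^3 - r^3) * U)) * L = (L * (A+R) * (3/(2*\<delta>^2)) * U * M^2) * (R^3 - r^3)"
        by (simp add: ac_simps)
      moreover have "(L * (A+R) * (3/(2*\<delta>^2)) * U * M^2) * (3*R^2*(R - r)) = Q * (R - r) * M^2"
        by (simp add: Q_def ac_simps)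
      ultimately have "(A+R) * (3/(2*\<delta>^2)) * (M^2 * ((R^3 - r^3) * U)) * L \<le> Q * (R - r) * M^2"
        by linarith
      then show "(A+R) * (3/(2*\<delta>^2)) * (M^2 * ((R^3 - r^3) * U)) * L \<le> (sqrt Q * (R - r) powr (1/2) * M)^2"
        by (simp only: e1)
    qed
    finally show "L2_sq_RB L (Y_trunc \<gamma> L (ball 0 R) (ball x0 r) f)
             \<le> ennreal ((sqrt Q * (R - r) powr (1/2) * real_of_ereal (Linf_norm (ball 0 R) f))\<^sup>2)"
      by (simp add: B_def C_def M_def)
  qed
qed

end
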